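(* Let $n\ge 0$, let $T$ be a triangulation of a regular polygon with $n+3$ vertices, let $\alpha,\alpha'$ be positive roots and write $S=\operatorname{Supp}\alpha$, $S'=\operatorname{Supp}\alpha'$. The following are equivalent: (A) there exists $i\in S\cap S'$ such that, denoting by $v_1,v_2$ the endpoints of $-\alpha_i$ and by $u_1,u_2$ (resp. $u_1',u_2'$) the endpoints of $\alpha$ (resp. $\alpha'$), and ordering the vertices counterclockwise starting at $v_1$ (for a suitable choice of labelling of the endpoints), one has $v_1<u_1\le u_1'<v_2<u_2\le u_2'$; (B) $S\cap S'\neq\emptyset$, there is no arrow in ${Q}_T$ from $S\setminus S'$ to $S\cap S'$, and there is no arrow in ${Q}_T$ from $S\cap S'$ to $S'\setminus S$.
   Context: Diagonals of the polygon are called roots; those in $T$ are negative roots, indexed by a set $I$ (the one indexed by $i$ written $-\alpha_i$), and the others positive roots. $\operatorname{Supp}\alpha$ is the set of $i\in I$ with $-\alpha_i$ crossing $\alpha$. If $-\alpha_i,-\alpha_j$ bound a common triangle of $T$ with common vertex $x$, set $-\alpha_i<-\alpha_j$ if the minimal-angle rotation about $x$ sending the line through $-\alpha_i$ to that through $-\alpha_j$ is counterclockwise. ${Q}_T$ has vertex set $I$ and an arrow $j\to i$ whenever $-\alpha_i,-\alpha_j$ bound a common triangle and $-\alpha_i<-\alpha_j$. *)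

theory Defs
  imports Main
begin

text \<open>Vertices of the (convex, regular) polygon with N vertices are 0,...,N-1,
 labelled counterclockwise. A diagonal (root) is a 2-element set of non-adjacent vertices.\<close>

definition adjacent :: "nat \<Rightarrow> nat \<Rightarrow> nat \<Rightarrow> bool" where
  "adjacent N a b \<longleftrightarrow> (a + 1) mod N = b \<or> (b + 1) mod N = a"

definition is_diag :: "nat \<Rightarrow> nat set \<Rightarrow> bool" where
  "is_diag N d \<longleftrightarrow> (\<exists>a b. d = {a, b} \<and> a < b \<and> b < N \<and> \<not> adjacent N a b)"

definition is_side :: "nat \<Rightarrow> nat set \<Rightarrow> bool" where
  "is_side N d \<longleftrightarrow> (\<exists>a b. d = {a, b} \<and> a < N \<and> b < N \<and> a \<noteq> b \<and> adjacent N a b)"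

definition crosses :: "nat set \<Rightarrow> nat set \<Rightarrow> bool" where
  "crosses d e \<longleftrightarrow> (\<exists>a b c c'. d = {a, b} \<and> e = {c, c'} \<and> a < c \<and> c < b \<and> (c' < a \<or> b < c'))"

definition triangulation :: "nat \<Rightarrow> nat set set \<Rightarrow> bool" where
  "triangulation N T \<longleftrightarrow> T \<subseteq> {d. is_diag N d} \<and> (\<forall>d\<in>T. \<forall>e\<in>T. \<not> crosses d e)
     \<and> (\<forall>d. is_diag N d \<and> d \<notin> T \<longrightarrow> (\<exists>e\<in>T. crosses d e))"

definition positive_root :: "nat \<Rightarrow> nat set set \<Rightarrow> nat set \<Rightarrow> bool" where
  "positive_root N T \<alpha> \<longleftrightarrow> is_diag N \<alpha> \<and> \<alpha> \<notin> T"

text \<open>Negative roots are the diagonals in T; we index them by themselves (I = T).\<close>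
definition Supp :: "nat set set \<Rightarrow> nat set \<Rightarrow> nat set set" where
  "Supp T \<alpha> = {d \<in> T. crosses d \<alpha>}"

definition triangle_of :: "nat \<Rightarrow> nat set set \<Rightarrow> nat \<Rightarrow> nat \<Rightarrow> nat \<Rightarrow> bool" where
  "triangle_of N T x a b \<longleftrightarrow> x < N \<and> a < N \<and> b < N \<and> x \<noteq> a \<and> x \<noteq> b \<and> a \<noteq> b
     \<and> ({x, a} \<in> T \<or> is_side N {x, a}) \<and> ({x, b} \<in> T \<or> is_side N {x, b})
     \<and> ({a, b} \<in> T \<or> is_side N {a, b})"

definition ccw_pos :: "nat \<Rightarrow> nat \<Rightarrow> nat \<Rightarrow> nat" where
  "ccw_pos N v w = (w + N - v) mod N"

text \<open>root_less N T di dj: di, dj bound a common triangle with common vertex x, and the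
 counterclockwise rotation about x through the triangle's angle (< pi) sends the ray to the
 other endpoint of di onto the ray to the other endpoint of dj.\<close>
definition root_less :: "nat \<Rightarrow> nat set set \<Rightarrow> nat set \<Rightarrow> nat set \<Rightarrow> bool" where
  "root_less N T di dj \<longleftrightarrow> (\<exists>x a b. di = {x, a} \<and> dj = {x, b} \<and> triangle_of N T x a b
      \<and> ccw_pos N x a < ccw_pos N x b)"

text \<open>Arrow j \<rightarrow> i in Q_T.\<close>
definition arrow :: "nat \<Rightarrow> nat set set \<Rightarrow> nat set \<Rightarrow> nat set \<Rightarrow> bool" where
  "arrow N T j i \<longleftrightarrow> i \<in> T \<and> j \<in> T \<and> root_less N T i j"

end

theory Submission
  imports Defs
begin

definition xl :: "nat \<Rightarrow> nat \<Rightarrow> nat \<Rightarrow> nat \<Rightarrow> bool" where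
 "xl a b c d \<longleftrightarrow> ((a<c \<and> c<b \<or> b<c \<and> c<a) \<and> (d < min a b \<or> max a b < d)
     \<or> (a<d \<and> d<b \<or> b<d \<and> d<a) \<and> (c < min a b \<or> max a b < c))"

lemma crosses_iff: "crosses {a,b} {c,d} \<longleftrightarrow> xl a b c d"
proof
  assume "crosses {a,b} {c,d}"
  then obtain a0 b0 c0 c0' where "{a,b} = {a0,b0}" "{c,d} = {c0,c0'}" "a0 < c0" "c0 < b0" "c0' < a0 \<or> b0 < c0'"
    unfolding crosses_def by blast
  then show "xl a b c d" unfolding xl_def doubleton_eq_iff by auto
next
  assume "xl a b c d"
  then consider "a<c \<and> c<b \<and> (d < a \<or> b < d)" | "b<c \<and> c<a \<and> (d < b \<or> a < d)"
     | "a<d \<and> d<b \<and> (c < a \<or> b < c)" | "b<d \<and> d<a \<and> (c < b \<or> a < c)"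
    unfolding xl_def by (auto simp: min_def max_def split: if_splits)
  then show "crosses {a,b} {c,d}"
  proof cases
    case 1 then show ?thesis unfolding crosses_def by blast
  next
    case 2 then show ?thesis unfolding crosses_def by (metis insert_commute)
  next
    case 3 then show ?thesis unfolding crosses_def by (metis insert_commute)
  next
    case 4 then show ?thesis unfolding crosses_def by (metis insert_commute)
  qed
qed

lemma ccw_alt: "v < N \<Longrightarrow> w < N \<Longrightarrow> ccw_pos N v w = (if v \<le> w then w - v else w + N - v)"
  unfolding ccw_pos_def
  by (auto simp: mod_if le_mod_geq)

lemma adj_alt: "a < N \<Longrightarrow> b < N \<Longrightarrow> adjacent N a b \<longleftrightarrow> (a+1 = b \<or> b+1 = a \<or> (a+1 = N \<and> b = 0) \<or> (b+1=N \<and> a = 0))"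
  unfolding adjacent_def by (auto simp: mod_if)

definition xi :: "int \<Rightarrow> int \<Rightarrow> int \<Rightarrow> int \<Rightarrow> bool" where
 "xi a b c d \<longleftrightarrow> ((a<c \<and> c<b \<or> b<c \<and> c<a) \<and> (d < min a b \<or> max a b < d)
     \<or> (a<d \<and> d<b \<or> b<d \<and> d<a) \<and> (c < min a b \<or> max a b < c))"
definition cc :: "int \<Rightarrow> int \<Rightarrow> int \<Rightarrow> int" where "cc N v w = (if v \<le> w then w - v else w + N - v)"
definition G :: "int \<Rightarrow> int \<Rightarrow> int \<Rightarrow> int \<Rightarrow> int \<Rightarrow> int \<Rightarrow> int \<Rightarrow> bool" where
 "G N v w u1 u2 u1' u2' \<longleftrightarrow> 0 < cc N v u1 \<and> cc N v u1 \<le> cc N v u1' \<and> cc N v u1' < cc N v w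
    \<and> cc N v w < cc N v u2 \<and> cc N v u2 \<le> cc N v u2'"
definition K :: "int \<Rightarrow> int \<Rightarrow> int \<Rightarrow> int \<Rightarrow> int \<Rightarrow> int \<Rightarrow> int \<Rightarrow> bool" where
 "K N w1 w2 a b a' b' \<longleftrightarrow> 0 < cc N w1 a' \<and> cc N w1 a' < cc N w1 a \<and> cc N w1 a < cc N w1 w2
    \<and> cc N w1 w2 < cc N w1 b \<and> cc N w1 w2 < cc N w1 b'"
declare [[smt_timeout=300]]

lemma AB2i:
  fixes N v1 v2 u1 u2 w1 w2 x a b :: int
  assumes "0 \<le> v1" "0 \<le> v2" "0 \<le> u1" "0 \<le> u2" "0 \<le> w1" "0 \<le> w2" "0 \<le> x" "0 \<le> a" "0 \<le> b"
  assumes "v1 < N" "v2 < N" "u1 < N" "u2 < N" "w1 < N" "w2 < N" "x < N" "a < N" "b < N"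
  and "G N v1 v2 u1 u2 w1 w2"
  and "xi x b u1 u2" "xi x b w1 w2" "xi x a w1 w2" "\<not> xi x a u1 u2" "cc N x a < cc N x b"
  and "\<not> xi v1 v2 x a" "\<not> xi v1 v2 x b" "\<not> xi v1 v2 a b"
  shows False
  using assms unfolding xi_def cc_def G_def by (smt (z3))

lemma PREi:
  fixes N v1 v2 a1 a2 b1 b2 :: int
  assumes "0 \<le> v1" "0 \<le> v2" "0 \<le> a1" "0 \<le> a2" "0 \<le> b1" "0 \<le> b2"
  assumes "v1 < N" "v2 < N" "a1 < N" "a2 < N" "b1 < N" "b2 < N"
  and "xi v1 v2 a1 a2" "xi v1 v2 b1 b2"
  and "\<not> G N v1 v2 a1 a2 b1 b2" "\<not> G N v1 v2 a2 a1 b1 b2" "\<not> G N v1 v2 a1 a2 b2 b1" "\<not> G N v1 v2 a2 a1 b2 b1"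
  and "\<not> G N v2 v1 a1 a2 b1 b2" "\<not> G N v2 v1 a2 a1 b1 b2" "\<not> G N v2 v1 a1 a2 b2 b1" "\<not> G N v2 v1 a2 a1 b2 b1"
  shows "K N v1 v2 a1 a2 b1 b2 \<or> K N v1 v2 a2 a1 b1 b2 \<or> K N v1 v2 a1 a2 b2 b1 \<or> K N v1 v2 a2 a1 b2 b1 \<or>
         K N v2 v1 a1 a2 b1 b2 \<or> K N v2 v1 a2 a1 b1 b2 \<or> K N v2 v1 a1 a2 b2 b1 \<or> K N v2 v1 a2 a1 b2 b1"
  using assms unfolding xi_def cc_def G_def K_def by (smt (z3))

lemma C1:
  fixes N w1 w2 a b a' b' z :: int
  assumes "0 \<le> w1" "0 \<le> w2" "0 \<le> a" "0 \<le> b" "0 \<le> a'" "0 \<le> b'" "0 \<le> z"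
    "w1 < N" "w2 < N" "a < N" "b < N" "a' < N" "b' < N" "z < N"
    "K N w1 w2 a b a' b'" "0 < cc N w1 z" "cc N w1 z < cc N w1 w2"
  shows "cc N w1 z < cc N w1 a' \<Longrightarrow> xi z w2 a b \<and> K N z w2 a b a' b' \<and> cc N z w2 < cc N w1 w2"
   and "cc N w1 a' \<le> cc N w1 z \<Longrightarrow> cc N w1 z < cc N w1 a \<Longrightarrow> xi w2 z a b \<and> \<not> xi w2 z a' b' \<and> cc N w2 w1 < cc N w2 z"
   and "xi w1 w2 a b" "xi w1 w2 a' b'"
   and "cc N w1 z = cc N w1 a \<Longrightarrow> z = a \<and> xi w1 z a' b' \<and> \<not> xi w1 z a b \<and> cc N w1 z < cc N w1 w2"
   and "cc N w1 a < cc N w1 z \<Longrightarrow> xi w1 z a b \<and> K N w1 z a b a' b'"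
  using assms unfolding xi_def cc_def K_def by (smt (z3))+

lemma TRI2:
  fixes N w1 w2 z c1 c2 :: int
  assumes "0 \<le> w1" "0 \<le> w2" "0 \<le> z" "0 \<le> c1" "0 \<le> c2"
    "w1 < N" "w2 < N" "z < N" "c1 < N" "c2 < N"
    "xi z w2 c1 c2" "\<not> xi w1 w2 c1 c2" "\<not> xi w1 z c1 c2" "0 < cc N w1 z" "cc N w1 z < cc N w1 w2"
  shows "(c1 = w1 \<and> cc N w1 z < cc N w1 c2 \<and> cc N w1 c2 < cc N w1 w2) \<or> (c2 = w1 \<and> cc N w1 z < cc N w1 c1 \<and> cc N w1 c1 < cc N w1 w2)"
  using assms unfolding xi_def cc_def by (smt (z3))

lemma xi_nat: "xi (int a) (int b) (int c) (int d) = crosses {a,b} {c,d}"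
  unfolding crosses_iff xl_def xi_def by (simp add: min_def max_def)

lemma cc_nat: "v < N \<Longrightarrow> w < N \<Longrightarrow> cc (int N) (int v) (int w) = int (ccw_pos N v w)"
  by (simp add: cc_def ccw_alt of_nat_diff)

definition Gn :: "nat \<Rightarrow> nat \<Rightarrow> nat \<Rightarrow> nat \<Rightarrow> nat \<Rightarrow> nat \<Rightarrow> nat \<Rightarrow> bool" where
 "Gn N v1 v2 u1 u2 u1' u2' \<longleftrightarrow> ccw_pos N v1 v1 < ccw_pos N v1 u1 \<and>
            ccw_pos N v1 u1 \<le> ccw_pos N v1 u1' \<and>
            ccw_pos N v1 u1' < ccw_pos N v1 v2 \<and>
            ccw_pos N v1 v2 < ccw_pos N v1 u2 \<and>
            ccw_pos N v1 u2 \<le> ccw_pos N v1 u2'"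
definition Kn :: "nat \<Rightarrow> nat \<Rightarrow> nat \<Rightarrow> nat \<Rightarrow> nat \<Rightarrow> nat \<Rightarrow> nat \<Rightarrow> bool" where
 "Kn N w1 w2 a b a' b' \<longleftrightarrow> 0 < ccw_pos N w1 a' \<and> ccw_pos N w1 a' < ccw_pos N w1 a \<and> ccw_pos N w1 a < ccw_pos N w1 w2
    \<and> ccw_pos N w1 w2 < ccw_pos N w1 b \<and> ccw_pos N w1 w2 < ccw_pos N w1 b'"

lemma G_nat: "v1 < N \<Longrightarrow> v2 < N \<Longrightarrow> u1 < N \<Longrightarrow> u2 < N \<Longrightarrow> u1' < N \<Longrightarrow> u2' < N \<Longrightarrow>
  G (int N) (int v1) (int v2) (int u1) (int u2) (int u1') (int u2') = Gn N v1 v2 u1 u2 u1' u2'"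
  unfolding G_def Gn_def by (simp add: cc_nat ccw_alt)

lemma K_nat: "w1 < N \<Longrightarrow> w2 < N \<Longrightarrow> a < N \<Longrightarrow> b < N \<Longrightarrow> a' < N \<Longrightarrow> b' < N \<Longrightarrow>
  K (int N) (int w1) (int w2) (int a) (int b) (int a') (int b') = Kn N w1 w2 a b a' b'"
  unfolding K_def Kn_def by (simp add: cc_nat)

lemmas bridge = xi_nat cc_nat G_nat K_nat

lemma side_nocross: assumes "is_side N {x,y}" "c < N" "d < N" shows "\<not> crosses {x,y} {c,d}"
proof -
  obtain a b where ab: "{x,y} = {a,b}" "a < N" "b < N" "a \<noteq> b" "adjacent N a b"
    using assms(1) unfolding is_side_def by blast
  show ?thesis unfolding ab(1) crosses_iff xl_def using ab(2-5) assms(2,3)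
    by (auto simp: adj_alt)
qed

lemma crosses_sym: "crosses {a,b} {c,d} \<Longrightarrow> crosses {c,d} {a,b}"
  unfolding crosses_iff xl_def by (auto simp: min_def max_def split: if_splits)

lemma C1n:
  assumes "w1 < N" "w2 < N" "a < N" "b < N" "a' < N" "b' < N" "z < N"
    "Kn N w1 w2 a b a' b'" "0 < ccw_pos N w1 z" "ccw_pos N w1 z < ccw_pos N w1 w2"
  shows "ccw_pos N w1 z < ccw_pos N w1 a' \<Longrightarrow> crosses {z,w2} {a,b} \<and> Kn N z w2 a b a' b' \<and> ccw_pos N z w2 < ccw_pos N w1 w2"
   and "ccw_pos N w1 a' \<le> ccw_pos N w1 z \<Longrightarrow> ccw_pos N w1 z < ccw_pos N w1 a \<Longrightarrow> crosses {w2,z} {a,b} \<and> \<not> crosses {w2,z} {a',b'} \<and> ccw_pos N w2 w1 < ccw_pos N w2 z"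
   and "crosses {w1,w2} {a,b}" "crosses {w1,w2} {a',b'}"
   and "ccw_pos N w1 z = ccw_pos N w1 a \<Longrightarrow> z = a \<and> crosses {w1,z} {a',b'} \<and> \<not> crosses {w1,z} {a,b}"
   and "ccw_pos N w1 a < ccw_pos N w1 z \<Longrightarrow> crosses {w1,z} {a,b} \<and> Kn N w1 z a b a' b'"
  using assms C1(1)[of "int w1" "int w2" "int a" "int b" "int a'" "int b'" "int z" "int N"] apply (simp add: bridge)
  using assms C1(2)[of "int w1" "int w2" "int a" "int b" "int a'" "int b'" "int z" "int N"] apply (simp add: bridge)
  using assms C1(3)[of "int w1" "int w2" "int a" "int b" "int a'" "int b'" "int z" "int N"] apply (simp add: bridge)
  using assms C1(4)[of "int w1" "int w2" "int a" "int b" "int a'" "int b'" "int z" "int N"] apply (simp add: bridge)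
  using assms C1(5)[of "int w1" "int w2" "int a" "int b" "int a'" "int b'" "int z" "int N"] apply (simp add: bridge) apply blast
  using assms C1(6)[of "int w1" "int w2" "int a" "int b" "int a'" "int b'" "int z" "int N"] apply (simp add: bridge)
  done

lemma AB1i:
  fixes N v1 v2 u1 u2 w1 w2 x a b :: int
  assumes "0 \<le> v1" "0 \<le> v2" "0 \<le> u1" "0 \<le> u2" "0 \<le> w1" "0 \<le> w2" "0 \<le> x" "0 \<le> a" "0 \<le> b"
  assumes "v1 < N" "v2 < N" "u1 < N" "u2 < N" "w1 < N" "w2 < N" "x < N" "a < N" "b < N"
  and "G N v1 v2 u1 u2 w1 w2"
  and "xi x a u1 u2" "xi x b u1 u2" "xi x a w1 w2" "\<not> xi x b w1 w2" "cc N x a < cc N x b"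
  and "\<not> xi v1 v2 x a" "\<not> xi v1 v2 x b" "\<not> xi v1 v2 a b"
  shows False
  using assms unfolding xi_def cc_def G_def by (smt (z3))

lemma AB1n:
  assumes "v1 < N" "v2 < N" "u1 < N" "u2 < N" "w1 < N" "w2 < N" "x < N" "a < N" "b < N"
  and "Gn N v1 v2 u1 u2 w1 w2"
  and "crosses {x,a} {u1,u2}" "crosses {x,b} {u1,u2}" "crosses {x,a} {w1,w2}" "\<not> crosses {x,b} {w1,w2}"
      "ccw_pos N x a < ccw_pos N x b"
  and "\<not> crosses {v1,v2} {x,a}" "\<not> crosses {v1,v2} {x,b}" "\<not> crosses {v1,v2} {a,b}"
  shows False
  using assms AB1i[of "int v1" "int v2" "int u1" "int u2" "int w1" "int w2" "int x" "int a" "int b" "int N"]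
  by (simp add: bridge)

lemma AB2n:
  assumes "v1 < N" "v2 < N" "u1 < N" "u2 < N" "w1 < N" "w2 < N" "x < N" "a < N" "b < N"
  and "Gn N v1 v2 u1 u2 w1 w2"
  and "crosses {x,b} {u1,u2}" "crosses {x,b} {w1,w2}" "crosses {x,a} {w1,w2}" "\<not> crosses {x,a} {u1,u2}"
      "ccw_pos N x a < ccw_pos N x b"
  and "\<not> crosses {v1,v2} {x,a}" "\<not> crosses {v1,v2} {x,b}" "\<not> crosses {v1,v2} {a,b}"
  shows False
  using assms AB2i[of "int v1" "int v2" "int u1" "int u2" "int w1" "int w2" "int x" "int a" "int b" "int N"]
  by (simp add: bridge)

lemma PREn:
  assumes "v1 < N" "v2 < N" "a1 < N" "a2 < N" "b1 < N" "b2 < N"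
  and "crosses {v1,v2} {a1,a2}" "crosses {v1,v2} {b1,b2}"
  and "\<not> Gn N v1 v2 a1 a2 b1 b2" "\<not> Gn N v1 v2 a2 a1 b1 b2" "\<not> Gn N v1 v2 a1 a2 b2 b1" "\<not> Gn N v1 v2 a2 a1 b2 b1"
  and "\<not> Gn N v2 v1 a1 a2 b1 b2" "\<not> Gn N v2 v1 a2 a1 b1 b2" "\<not> Gn N v2 v1 a1 a2 b2 b1" "\<not> Gn N v2 v1 a2 a1 b2 b1"
  shows "Kn N v1 v2 a1 a2 b1 b2 \<or> Kn N v1 v2 a2 a1 b1 b2 \<or> Kn N v1 v2 a1 a2 b2 b1 \<or> Kn N v1 v2 a2 a1 b2 b1 \<or>
         Kn N v2 v1 a1 a2 b1 b2 \<or> Kn N v2 v1 a2 a1 b1 b2 \<or> Kn N v2 v1 a1 a2 b2 b1 \<or> Kn N v2 v1 a2 a1 b2 b1"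
  using assms PREi[of "int v1" "int v2" "int a1" "int a2" "int b1" "int b2" "int N"]
  by (simp add: bridge)

lemma TRI2n:
  assumes "w1 < N" "w2 < N" "z < N" "c1 < N" "c2 < N"
    "crosses {z,w2} {c1,c2}" "\<not> crosses {w1,w2} {c1,c2}" "\<not> crosses {w1,z} {c1,c2}"
    "0 < ccw_pos N w1 z" "ccw_pos N w1 z < ccw_pos N w1 w2"
  shows "(c1 = w1 \<and> ccw_pos N w1 z < ccw_pos N w1 c2 \<and> ccw_pos N w1 c2 < ccw_pos N w1 w2) \<or>
         (c2 = w1 \<and> ccw_pos N w1 z < ccw_pos N w1 c1 \<and> ccw_pos N w1 c1 < ccw_pos N w1 w2)"
  using assms TRI2[of "int w1" "int w2" "int z" "int c1" "int c2" "int N"]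
  by (simp add: bridge)

lemma adj_sym: "adjacent N a b = adjacent N b a"
  unfolding adjacent_def by auto

lemma diag_ends: "is_diag N d \<Longrightarrow> \<exists>a b. d = {a,b} \<and> a < b \<and> b < N \<and> \<not> adjacent N a b"
  unfolding is_diag_def by blast

lemma T_diag: "triangulation N T \<Longrightarrow> d \<in> T \<Longrightarrow> is_diag N d"
  unfolding triangulation_def by blast

lemma T_nocross: "triangulation N T \<Longrightarrow> d \<in> T \<Longrightarrow> e \<in> T \<Longrightarrow> \<not> crosses d e"
  unfolding triangulation_def by blast

lemma T_max: "triangulation N T \<Longrightarrow> is_diag N d \<Longrightarrow> d \<notin> T \<Longrightarrow> \<exists>e\<in>T. crosses d e"
  unfolding triangulation_def by blast

lemma diag_pair: "is_diag N {x,y} \<Longrightarrow> x < N \<and> y < N \<and> x \<noteq> y \<and> \<not> adjacent N x y"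
  unfolding is_diag_def doubleton_eq_iff using adj_sym by fastforce

lemma pair_in_T: "triangulation N T \<Longrightarrow> {x,y} \<in> T \<Longrightarrow> x < N \<and> y < N \<and> x \<noteq> y \<and> \<not> adjacent N x y"
  using T_diag diag_pair by blast

lemma tri_exists:
  assumes tr: "triangulation N T" and wT: "{w1,w2} \<in> T"
  shows "\<exists>z<N. 0 < ccw_pos N w1 z \<and> ccw_pos N w1 z < ccw_pos N w1 w2 \<and> ({w1,z} \<in> T \<or> is_side N {w1,z})
           \<and> ({z,w2} \<in> T \<or> is_side N {z,w2})"
proof -
  have w: "w1 < N" "w2 < N" "w1 \<noteq> w2" "\<not> adjacent N w1 w2" using pair_in_T[OF tr wT] by auto
  define f where "f y = ccw_pos N w1 y" for y
  define Z where "Z = {z. z < N \<and> 0 < f z \<and> f z < f w2 \<and> ({w1,z} \<in> T \<or> is_side N {w1,z})}"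
  define z0 where "z0 = (if w1 + 1 = N then 0 else w1 + 1)"
  have z0: "z0 < N" "f z0 = 1" "adjacent N w1 z0" "z0 \<noteq> w1"
    using w by (auto simp: z0_def f_def ccw_alt adj_alt)
  have f2: "1 < f w2" using w by (auto simp: f_def ccw_alt adj_alt)
  have "is_side N {w1,z0}" unfolding is_side_def using z0 w by blast
  then have z0Z: "z0 \<in> Z" unfolding Z_def using z0 f2 by auto
  have fin: "finite Z" by (rule finite_subset[of _ "{..<N}"]) (auto simp: Z_def)
  have "Max (f ` Z) \<in> f ` Z" using fin z0Z by (intro Max_in) auto
  then obtain z where z: "z \<in> Z" "f z = Max (f ` Z)" by auto
  have zmax: "f y \<le> f z" if "y \<in> Z" for y using z(2) fin that by simp
  have zN: "z < N" "0 < f z" "f z < f w2" and zl: "{w1,z} \<in> T \<or> is_side N {w1,z}" using z(1) unfolding Z_def by auto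
  have zs: "{z,w2} \<in> T \<or> is_side N {z,w2}"
  proof (rule ccontr)
    assume nz: "\<not> ({z,w2} \<in> T \<or> is_side N {z,w2})"
    have zw: "z \<noteq> w2" using zN by auto
    have nadj: "\<not> adjacent N z w2"
    proof
      assume "adjacent N z w2"
      then have "is_side N {z,w2}" unfolding is_side_def using zN w zw by blast
      then show False using nz by blast
    qed
    have "is_diag N {z,w2}"
    proof (cases "z < w2")
      case True then show ?thesis unfolding is_diag_def using nadj w by blast
    next
      case False
      then have "w2 < z" using zw by auto
      then show ?thesis unfolding is_diag_def using nadj adj_sym[of N z w2] zN
        by (metis insert_commute)
    qed
    then obtain e where eT: "e \<in> T" and ce: "crosses {z,w2} e" using T_max[OF tr] nz by blast
    obtain c1 c2 where e: "e = {c1,c2}" "c1 < c2" "c2 < N" using diag_ends[OF T_diag[OF tr eT]] by blast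
    have n1: "\<not> crosses {w1,w2} {c1,c2}" using T_nocross[OF tr wT eT] e by simp
    have n2: "\<not> crosses {w1,z} {c1,c2}"
      using zl T_nocross[OF tr _ eT] e side_nocross[of N w1 z c1 c2] by auto
    have "(c1 = w1 \<and> f z < f c2 \<and> f c2 < f w2) \<or> (c2 = w1 \<and> f z < f c1 \<and> f c1 < f w2)"
      unfolding f_def using TRI2n[OF w(1,2) zN(1) _ e(3) _ n1 n2] e ce zN(2,3) unfolding f_def by auto
    then show False
    proof
      assume h: "c1 = w1 \<and> f z < f c2 \<and> f c2 < f w2"
      then have "c2 \<in> Z" unfolding Z_def using eT e by auto
      then show False using zmax h by fastforce
    next
      assume h: "c2 = w1 \<and> f z < f c1 \<and> f c1 < f w2"
      then have "c1 \<in> Z" unfolding Z_def using eT e by (auto simp: insert_commute)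
      then show False using zmax h by fastforce
    qed
  qed
  show ?thesis using zN zl zs unfolding f_def by blast
qed

lemma ccw_self: "v < N \<Longrightarrow> ccw_pos N v v = 0"
  by (simp add: ccw_alt)

lemma core:
  assumes tr: "triangulation N T" and al: "\<alpha> = {a,b}" and al': "\<alpha>' = {a',b'}"
    and bnd: "a < N" "b < N" "a' < N" "b' < N"
  shows "{w1,w2} \<in> T \<Longrightarrow> Kn N w1 w2 a b a' b' \<Longrightarrow>
    (\<exists>j \<in> Supp T \<alpha> - Supp T \<alpha>'. \<exists>i \<in> Supp T \<alpha> \<inter> Supp T \<alpha>'. arrow N T j i) \<or>
    (\<exists>j \<in> Supp T \<alpha> \<inter> Supp T \<alpha>'. \<exists>i \<in> Supp T \<alpha>' - Supp T \<alpha>. arrow N T j i)"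
proof (induction "ccw_pos N w1 w2" arbitrary: w1 w2 rule: less_induct)
  case less
  have w: "w1 < N" "w2 < N" "w1 \<noteq> w2" using pair_in_T[OF tr less.prems(1)] by auto
  obtain z where z: "z < N" "0 < ccw_pos N w1 z" "ccw_pos N w1 z < ccw_pos N w1 w2"
    and zl: "{w1,z} \<in> T \<or> is_side N {w1,z}" and zr: "{z,w2} \<in> T \<or> is_side N {z,w2}"
    using tri_exists[OF tr less.prems(1)] by blast
  have zne: "z \<noteq> w1" "z \<noteq> w2" using z w ccw_self[of w1 N] by auto
  note C = C1n[OF w(1,2) bnd z(1) less.prems(2) z(2) z(3)]
  have iS: "{w1,w2} \<in> Supp T \<alpha> \<inter> Supp T \<alpha>'" using C(3) C(4) less.prems(1) al al' unfolding Supp_def by auto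
  consider (i) "ccw_pos N w1 z < ccw_pos N w1 a'"
    | (ii) "ccw_pos N w1 a' \<le> ccw_pos N w1 z" "ccw_pos N w1 z < ccw_pos N w1 a"
    | (iv) "ccw_pos N w1 z = ccw_pos N w1 a" | (v) "ccw_pos N w1 a < ccw_pos N w1 z" by linarith
  then show ?case
  proof cases
    case i
    from C(1)[OF i] have cr: "crosses {z,w2} {a,b}" "Kn N z w2 a b a' b'" "ccw_pos N z w2 < ccw_pos N w1 w2" by auto
    have zT: "{z,w2} \<in> T" using zr side_nocross[of N z w2 a b] cr bnd by blast
    show ?thesis using less.hyps[OF cr(3) zT cr(2)] .
  next
    case ii
    from C(2)[OF ii] have cr: "crosses {w2,z} {a,b}" "\<not> crosses {w2,z} {a',b'}" "ccw_pos N w2 w1 < ccw_pos N w2 z" by auto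
    have jT: "{z,w2} \<in> T" using zr side_nocross[of N z w2 a b] cr bnd by (auto simp: insert_commute)
    have jS: "{w2,z} \<in> Supp T \<alpha> - Supp T \<alpha>'" using jT cr al al' unfolding Supp_def by (auto simp: insert_commute)
    have tri: "triangle_of N T w2 w1 z" unfolding triangle_of_def
      using w z(1) zne less.prems(1) zl zr by (auto simp: insert_commute)
    have "arrow N T {w2,z} {w1,w2}" unfolding arrow_def root_less_def
      using less.prems(1) jT tri cr(3) by (auto simp: insert_commute)
    then show ?thesis using iS jS by blast
  next
    case iv
    from C(5)[OF iv] have cr: "z = a" "crosses {w1,z} {a',b'}" "\<not> crosses {w1,z} {a,b}" by auto
    have kT: "{w1,z} \<in> T" using zl side_nocross[of N w1 z a' b'] cr bnd by blast
    have kS: "{w1,z} \<in> Supp T \<alpha>' - Supp T \<alpha>" using kT cr al al' unfolding Supp_def by auto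
    have tri: "triangle_of N T w1 z w2" unfolding triangle_of_def
      using w z(1) zne less.prems(1) zl zr by (auto simp: insert_commute)
    have "arrow N T {w1,w2} {w1,z}" unfolding arrow_def root_less_def
      using less.prems(1) kT tri z(3) by blast
    then show ?thesis using iS kS by blast
  next
    case v
    from C(6)[OF v] have cr: "crosses {w1,z} {a,b}" "Kn N w1 z a b a' b'" by auto
    have kT: "{w1,z} \<in> T" using zl side_nocross[of N w1 z a b] cr bnd by blast
    show ?thesis using less.hyps[OF z(3) kT cr(2)] .
  qed
qed

lemma main_gen:
  fixes N :: nat and T :: "nat set set" and \<alpha> \<alpha>' :: "nat set"
  assumes tr: "triangulation N T"
    and pa: "positive_root N T \<alpha>" and pa': "positive_root N T \<alpha>'"
  shows "(\<exists>i \<in> Supp T \<alpha> \<inter> Supp T \<alpha>'. \<exists>v1 v2 u1 u2 u1' u2'.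
            i = {v1, v2} \<and> \<alpha> = {u1, u2} \<and> \<alpha>' = {u1', u2'} \<and>
            ccw_pos N v1 v1 < ccw_pos N v1 u1 \<and>
            ccw_pos N v1 u1 \<le> ccw_pos N v1 u1' \<and>
            ccw_pos N v1 u1' < ccw_pos N v1 v2 \<and>
            ccw_pos N v1 v2 < ccw_pos N v1 u2 \<and>
            ccw_pos N v1 u2 \<le> ccw_pos N v1 u2')
     \<longleftrightarrow>
         (Supp T \<alpha> \<inter> Supp T \<alpha>' \<noteq> {} \<and>
          \<not> (\<exists>j \<in> Supp T \<alpha> - Supp T \<alpha>'. \<exists>i \<in> Supp T \<alpha> \<inter> Supp T \<alpha>'. arrow N T j i) \<and>
          \<not> (\<exists>j \<in> Supp T \<alpha> \<inter> Supp T \<alpha>'. \<exists>i \<in> Supp T \<alpha>' - Supp T \<alpha>. arrow N T j i))"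
    (is "?A \<longleftrightarrow> ?B")
proof -
  obtain a1 a2 where al: "\<alpha> = {a1,a2}" "a1 < a2" "a2 < N"
    using pa unfolding positive_root_def is_diag_def by blast
  obtain b1 b2 where al': "\<alpha>' = {b1,b2}" "b1 < b2" "b2 < N"
    using pa' unfolding positive_root_def is_diag_def by blast
  have alN: "x < N" if "x \<in> \<alpha>" for x using that al by auto
  have alN': "x < N" if "x \<in> \<alpha>'" for x using that al' by auto
  show ?thesis
  proof
    assume ?A
    then obtain i v1 v2 u1 u2 u1' u2' where iS: "i \<in> Supp T \<alpha> \<inter> Supp T \<alpha>'"
      and eqs: "i = {v1,v2}" "\<alpha> = {u1,u2}" "\<alpha>' = {u1',u2'}" and g: "Gn N v1 v2 u1 u2 u1' u2'"
      unfolding Gn_def by blast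
    have iT: "i \<in> T" "crosses i \<alpha>" "crosses i \<alpha>'" using iS unfolding Supp_def by auto
    have vN: "v1 < N" "v2 < N" using pair_in_T[OF tr] iT(1) eqs(1) by auto
    have uN: "u1 < N" "u2 < N" "u1' < N" "u2' < N" using alN alN' eqs by auto
    have ncab: "\<not> crosses {v1,v2} {a,b}" if "{a,b} \<in> T \<or> is_side N {a,b}" "a < N" "b < N" for a b
      using that T_nocross[OF tr iT(1)] eqs(1) side_nocross[of N a b v1 v2] vN crosses_sym by blast
    show ?B
    proof (intro conjI notI)
      show "Supp T \<alpha> \<inter> Supp T \<alpha>' = {} \<Longrightarrow> False" using iS by blast
    next
      assume "\<exists>j \<in> Supp T \<alpha> - Supp T \<alpha>'. \<exists>k \<in> Supp T \<alpha> \<inter> Supp T \<alpha>'. arrow N T j k"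
      then obtain j k where j: "j \<in> Supp T \<alpha> - Supp T \<alpha>'" and k: "k \<in> Supp T \<alpha> \<inter> Supp T \<alpha>'"
        and arr: "arrow N T j k" by blast
      from arr obtain x a b where kj: "k = {x,a}" "j = {x,b}" and tri: "triangle_of N T x a b"
        and lt: "ccw_pos N x a < ccw_pos N x b" unfolding arrow_def root_less_def by blast
      have xab: "x < N" "a < N" "b < N" and ab: "{a,b} \<in> T \<or> is_side N {a,b}"
        using tri unfolding triangle_of_def by auto
      have jT: "j \<in> T" "k \<in> T" using j k unfolding Supp_def by auto
      have c1: "\<not> crosses {v1,v2} {x,a}" "\<not> crosses {v1,v2} {x,b}"
        using T_nocross[OF tr iT(1)] jT eqs(1) kj by auto
      have c2: "crosses {x,a} {u1,u2}" "crosses {x,b} {u1,u2}" "crosses {x,a} {u1',u2'}" "\<not> crosses {x,b} {u1',u2'}"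
        using j k kj eqs unfolding Supp_def by auto
      show False using AB1n[OF vN uN(1,2) uN(3,4) xab g c2 lt c1 ncab[OF ab xab(2,3)]] .
    next
      assume "\<exists>j \<in> Supp T \<alpha> \<inter> Supp T \<alpha>'. \<exists>k \<in> Supp T \<alpha>' - Supp T \<alpha>. arrow N T j k"
      then obtain j k where j: "j \<in> Supp T \<alpha> \<inter> Supp T \<alpha>'" and k: "k \<in> Supp T \<alpha>' - Supp T \<alpha>"
        and arr: "arrow N T j k" by blast
      from arr obtain x a b where kj: "k = {x,a}" "j = {x,b}" and tri: "triangle_of N T x a b"
        and lt: "ccw_pos N x a < ccw_pos N x b" unfolding arrow_def root_less_def by blast
      have xab: "x < N" "a < N" "b < N" and ab: "{a,b} \<in> T \<or> is_side N {a,b}"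
        using tri unfolding triangle_of_def by auto
      have jT: "j \<in> T" "k \<in> T" using j k unfolding Supp_def by auto
      have c1: "\<not> crosses {v1,v2} {x,a}" "\<not> crosses {v1,v2} {x,b}"
        using T_nocross[OF tr iT(1)] jT eqs(1) kj by auto
      have c2: "crosses {x,b} {u1,u2}" "crosses {x,b} {u1',u2'}" "crosses {x,a} {u1',u2'}" "\<not> crosses {x,a} {u1,u2}"
        using j k kj eqs unfolding Supp_def by auto
      show False using AB2n[OF vN uN(1,2) uN(3,4) xab g c2 lt c1 ncab[OF ab xab(2,3)]] .
    qed
  next
    assume B: ?B
    then obtain i0 where i0: "i0 \<in> Supp T \<alpha> \<inter> Supp T \<alpha>'" by blast
    show ?A
    proof (rule ccontr)
      assume nA: "\<not> ?A"
      have i0T: "i0 \<in> T" "crosses i0 \<alpha>" "crosses i0 \<alpha>'" using i0 unfolding Supp_def by auto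
      obtain v1 v2 where v: "i0 = {v1,v2}" "v1 < v2" "v2 < N"
        using diag_ends[OF T_diag[OF tr i0T(1)]] by blast
      have v1N: "v1 < N" using v by auto
      have ng: "\<not> Gn N v w u1 u2 u1' u2'" if "{v,w} = i0" "{u1,u2} = \<alpha>" "{u1',u2'} = \<alpha>'" for v w u1 u2 u1' u2'
        using nA i0 that unfolding Gn_def by blast
      have K8: "Kn N v1 v2 a1 a2 b1 b2 \<or> Kn N v1 v2 a2 a1 b1 b2 \<or> Kn N v1 v2 a1 a2 b2 b1 \<or> Kn N v1 v2 a2 a1 b2 b1 \<or>
         Kn N v2 v1 a1 a2 b1 b2 \<or> Kn N v2 v1 a2 a1 b1 b2 \<or> Kn N v2 v1 a1 a2 b2 b1 \<or> Kn N v2 v1 a2 a1 b2 b1"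
        apply (rule PREn[OF v1N v(3) _ al(3) _ al'(3)])
        using al al' v i0T apply auto[4]
        by (rule ng; simp add: al al' v insert_commute)+
      have T1: "{v1,v2} \<in> T" "{v2,v1} \<in> T" using i0T v by (auto simp: insert_commute)
      have e1: "\<alpha> = {a1,a2}" "\<alpha> = {a2,a1}" "\<alpha>' = {b1,b2}" "\<alpha>' = {b2,b1}" using al al' by (auto simp: insert_commute)
      have bn: "a1 < N" "a2 < N" "b1 < N" "b2 < N" using al al' by auto
      have "(\<exists>j \<in> Supp T \<alpha> - Supp T \<alpha>'. \<exists>i \<in> Supp T \<alpha> \<inter> Supp T \<alpha>'. arrow N T j i) \<or>
    (\<exists>j \<in> Supp T \<alpha> \<inter> Supp T \<alpha>'. \<exists>i \<in> Supp T \<alpha>' - Supp T \<alpha>. arrow N T j i)"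
        using K8
        apply (elim disjE)
        using core[OF tr e1(1) e1(3) bn(1,2,3,4) T1(1)] core[OF tr e1(2) e1(3) bn(2,1,3,4) T1(1)]
              core[OF tr e1(1) e1(4) bn(1,2,4,3) T1(1)] core[OF tr e1(2) e1(4) bn(2,1,4,3) T1(1)]
              core[OF tr e1(1) e1(3) bn(1,2,3,4) T1(2)] core[OF tr e1(2) e1(3) bn(2,1,3,4) T1(2)]
              core[OF tr e1(1) e1(4) bn(1,2,4,3) T1(2)] core[OF tr e1(2) e1(4) bn(2,1,4,3) T1(2)]
        by blast+
      then show False using B by blast
    qed
  qed
qed


theorem mainTheorem13:
  fixes n :: nat and T :: "nat set set" and \<alpha> \<alpha>' :: "nat set"
  assumes "triangulation (n + 3) T"
    and "positive_root (n + 3) T \<alpha>" and "positive_root (n + 3) T \<alpha>'"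
  shows "(\<exists>i \<in> Supp T \<alpha> \<inter> Supp T \<alpha>'. \<exists>v1 v2 u1 u2 u1' u2'.
            i = {v1, v2} \<and> \<alpha> = {u1, u2} \<and> \<alpha>' = {u1', u2'} \<and>
            ccw_pos (n + 3) v1 v1 < ccw_pos (n + 3) v1 u1 \<and>
            ccw_pos (n + 3) v1 u1 \<le> ccw_pos (n + 3) v1 u1' \<and>
            ccw_pos (n + 3) v1 u1' < ccw_pos (n + 3) v1 v2 \<and>
            ccw_pos (n + 3) v1 v2 < ccw_pos (n + 3) v1 u2 \<and>
            ccw_pos (n + 3) v1 u2 \<le> ccw_pos (n + 3) v1 u2')
     \<longleftrightarrow>
         (Supp T \<alpha> \<inter> Supp T \<alpha>' \<noteq> {} \<and>
          \<not> (\<exists>j \<in> Supp T \<alpha> - Supp T \<alpha>'. \<exists>i \<in> Supp T \<alpha> \<inter> Supp T \<alpha>'. arrow (n + 3) T j i) \<and>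
          \<not> (\<exists>j \<in> Supp T \<alpha> \<inter> Supp T \<alpha>'. \<exists>i \<in> Supp T \<alpha>' - Supp T \<alpha>. arrow (n + 3) T j i))"
  by (rule main_gen[OF assms])

end
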